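(* Let $U=(E,\mathcal{D},\rho)$ be a U-matroid, $E=[n]$, with generous matroid extension $\hat U$. Then $\mathcal{B}(\hat U) = \mathrm{conv}(\mathcal{B}(U)\cap\{0,1\}^n) = \mathcal{B}(U)\cap[0,1]^n$, and $\mathcal{I}(\hat U) = \mathrm{conv}(\mathcal{A}(U)\cap\{0,1\}^n) = \mathcal{A}(U)\cap[0,1]^n$.
   Context: A U-matroid is a triple $(E,\mathcal{D},\rho)$ with $E$ finite, $\mathcal{D}\subseteq2^E$ an accessible distributive lattice of sets, and $\rho:\mathcal{D}\to\mathbb{N}$ with $\rho(\emptyset)=0$, monotone, submodular, with unit increase. Its submodular polyhedron is $\mathcal{A}(U)=\{\mathbf{x}\in\mathbb{R}^n:\mathbf{x}(A)\le\rho(A)\ \forall A\in\mathcal{D}\}$ and its base polyhedron is $\mathcal{B}(U)=\{\mathbf{x}\in\mathcal{A}(U):\mathbf{x}(E)=\rho(E)\}$, where $\mathbf{x}(A)=\sum_{a\in A}x_a$. For a matroid $M$, $\mathcal{I}(M)$ is its independence polytope, the convex hull of characteristic vectors of independent sets. The generous matroid extension $\hat U=(E,2^E,\hat\rho)$ is the matroid obtained by iterating the generous atom extension: for $a$ with $\{a\}\notin\mathcal{D}$, on $\mathcal{D}[a]=\mathcal{D}\cup\{S\cup a:S\in\mathcal{D}\}$ set $\rho_a(S)=\rho(S)$ if $S\in\mathcal{D}$, $\rho_a(S)=\rho(S-a)$ if $S\notin\mathcal{D}$ and $\rho(S-a)=\rho(\sup_\mathcal{D}(S))$, and $\rho_a(S)=\rho(S-a)+1$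 otherwise ($\sup_\mathcal{D}(S)$ = smallest element of $\mathcal{D}$ containing $S$), repeating until the lattice is $2^E$; $\hat\rho$ is independent of the order and dominates every matroid extension of $\rho$. *)

theory Defs
  imports "HOL-Analysis.Analysis"
begin

text \<open>Ground set E = [n] is modelled as the universe of a finite type 'n;
  vectors in R^n are elements of real^'n.\<close>

definition vsum_set :: "real^'n \<Rightarrow> 'n set \<Rightarrow> real" where
  "vsum_set x A = (\<Sum>a\<in>A. x $ a)"

definition char_vec :: "'n set \<Rightarrow> real^'n" where
  "char_vec A = (\<chi> i. if i \<in> A then 1 else 0)"

definition zero_one_vecs :: "(real^'n) set" where
  "zero_one_vecs = {x. \<forall>i. x $ i = 0 \<or> x $ i = 1}"

definition unit_cube :: "(real^'n) set" where
  "unit_cube = {x. \<forall>i. 0 \<le> x $ i \<and> x $ i \<le> 1}"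

definition accessible_distributive_lattice :: "'n set set \<Rightarrow> bool" where
  "accessible_distributive_lattice D \<longleftrightarrow>
     {} \<in> D \<and> UNIV \<in> D \<and>
     (\<forall>A\<in>D. \<forall>B\<in>D. A \<union> B \<in> D \<and> A \<inter> B \<in> D) \<and>
     (\<forall>A\<in>D. A \<noteq> {} \<longrightarrow> (\<exists>a\<in>A. A - {a} \<in> D))"

definition U_matroid :: "'n::finite set set \<Rightarrow> ('n set \<Rightarrow> nat) \<Rightarrow> bool" where
  "U_matroid D \<rho> \<longleftrightarrow>
     accessible_distributive_lattice D \<and>
     \<rho> {} = 0 \<and>
     (\<forall>A\<in>D. \<forall>B\<in>D. A \<subseteq> B \<longrightarrow> \<rho> A \<le> \<rho> B) \<and>
     (\<forall>A\<in>D. \<forall>B\<in>D. \<rho> (A \<union> B) + \<rho> (A \<inter> B) \<le> \<rho> A + \<rho> B) \<and>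
     (\<forall>A\<in>D. \<forall>a. insert a A \<in> D \<longrightarrow> \<rho> (insert a A) \<le> \<rho> A + 1)"

definition submod_polyhedron :: "'n::finite set set \<Rightarrow> ('n set \<Rightarrow> nat) \<Rightarrow> (real^'n) set" where
  "submod_polyhedron D \<rho> = {x. \<forall>A\<in>D. vsum_set x A \<le> real (\<rho> A)}"

definition base_polyhedron :: "'n::finite set set \<Rightarrow> ('n set \<Rightarrow> nat) \<Rightarrow> (real^'n) set" where
  "base_polyhedron D \<rho> = {x \<in> submod_polyhedron D \<rho>. vsum_set x UNIV = real (\<rho> UNIV)}"

definition indep_polytope :: "('n::finite set \<Rightarrow> nat) \<Rightarrow> (real^'n) set" where
  "indep_polytope r = convex hull (char_vec ` {I. r I = card I})"

definition sup_in :: "'n set set \<Rightarrow> 'n set \<Rightarrow> 'n set" where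
  "sup_in D S = \<Inter>{T \<in> D. S \<subseteq> T}"

definition lattice_ext :: "'n set set \<Rightarrow> 'n \<Rightarrow> 'n set set" where
  "lattice_ext D a = D \<union> {insert a S | S. S \<in> D}"

definition atom_ext :: "'n set set \<Rightarrow> ('n set \<Rightarrow> nat) \<Rightarrow> 'n \<Rightarrow> 'n set \<Rightarrow> nat" where
  "atom_ext D \<rho> a S =
     (if S \<in> D then \<rho> S
      else if \<rho> (S - {a}) = \<rho> (sup_in D S) then \<rho> (S - {a})
      else \<rho> (S - {a}) + 1)"

inductive gen_ext :: "'n set set \<Rightarrow> ('n set \<Rightarrow> nat) \<Rightarrow> 'n set set \<Rightarrow> ('n set \<Rightarrow> nat) \<Rightarrow> bool" where
  gen_refl: "gen_ext D \<rho> D \<rho>"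
| gen_step: "{a} \<notin> D \<Longrightarrow> gen_ext (lattice_ext D a) (atom_ext D \<rho> a) D' \<rho>' \<Longrightarrow> gen_ext D \<rho> D' \<rho>'"

text \<open>Generous matroid extension: iterate until the lattice is the full power set 2^E.\<close>
definition generous_matroid_extension :: "'n set set \<Rightarrow> ('n set \<Rightarrow> nat) \<Rightarrow> ('n set \<Rightarrow> nat) \<Rightarrow> bool" where
  "generous_matroid_extension D \<rho> \<rho>h \<longleftrightarrow> gen_ext D \<rho> UNIV \<rho>h"

end

theory Submission
  imports Defs
begin

definition rk :: "'n::finite set set \<Rightarrow> ('n set \<Rightarrow> nat) \<Rightarrow> 'n set \<Rightarrow> nat" where
  "rk D \<rho> X = Min ((\<lambda>A. \<rho> A + card (X - A)) ` D)"

lemma rk_le: "A \<in> D \<Longrightarrow> rk D \<rho> X \<le> \<rho> A + card (X - A)"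
  unfolding rk_def by (rule Min_le) auto

lemma rk_attained: "D \<noteq> {} \<Longrightarrow> \<exists>B\<in>D. rk D \<rho> X = \<rho> B + card (X - B)"
proof -
  assume "D \<noteq> {}"
  then have "Min ((\<lambda>A. \<rho> A + card (X - A)) ` D) \<in> (\<lambda>A. \<rho> A + card (X - A)) ` D"
    by (intro Min_in) auto
  then show ?thesis unfolding rk_def by blast
qed

lemma U_D_props:
  assumes "U_matroid D \<rho>"
  shows "{} \<in> D" "UNIV \<in> D" "\<And>A B. A \<in> D \<Longrightarrow> B \<in> D \<Longrightarrow> A \<union> B \<in> D"
    "\<And>A B. A \<in> D \<Longrightarrow> B \<in> D \<Longrightarrow> A \<inter> B \<in> D"
    "\<And>A. A \<in> D \<Longrightarrow> A \<noteq> {} \<Longrightarrow> \<exists>a\<in>A. A - {a} \<in> D"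
    "\<rho> {} = 0"
    "\<And>A B. A \<in> D \<Longrightarrow> B \<in> D \<Longrightarrow> A \<subseteq> B \<Longrightarrow> \<rho> A \<le> \<rho> B"
    "\<And>A B. A \<in> D \<Longrightarrow> B \<in> D \<Longrightarrow> \<rho> (A \<union> B) + \<rho> (A \<inter> B) \<le> \<rho> A + \<rho> B"
    "\<And>A a. A \<in> D \<Longrightarrow> insert a A \<in> D \<Longrightarrow> \<rho> (insert a A) \<le> \<rho> A + 1"
proof -
  have a: "accessible_distributive_lattice D" and b: "\<rho> {} = 0"
    and c: "\<forall>A\<in>D. \<forall>B\<in>D. A \<subseteq> B \<longrightarrow> \<rho> A \<le> \<rho> B"
    and d: "\<forall>A\<in>D. \<forall>B\<in>D. \<rho> (A \<union> B) + \<rho> (A \<inter> B) \<le> \<rho> A + \<rho> B"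
    and e: "\<forall>A\<in>D. \<forall>a. insert a A \<in> D \<longrightarrow> \<rho> (insert a A) \<le> \<rho> A + 1"
    using assms unfolding U_matroid_def by simp_all
  have a1: "{} \<in> D" and a2: "UNIV \<in> D" and a3: "\<forall>A\<in>D. \<forall>B\<in>D. A \<union> B \<in> D \<and> A \<inter> B \<in> D"
    and a4: "\<forall>A\<in>D. A \<noteq> {} \<longrightarrow> (\<exists>a\<in>A. A - {a} \<in> D)"
    using a unfolding accessible_distributive_lattice_def by simp_all
  show "{} \<in> D" by (rule a1)
  show "UNIV \<in> D" by (rule a2)
  show "\<And>A B. A \<in> D \<Longrightarrow> B \<in> D \<Longrightarrow> A \<union> B \<in> D" using a3 by simp
  show "\<And>A B. A \<in> D \<Longrightarrow> B \<in> D \<Longrightarrow> A \<inter> B \<in> D" using a3 by simp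
  show "\<And>A. A \<in> D \<Longrightarrow> A \<noteq> {} \<Longrightarrow> \<exists>a\<in>A. A - {a} \<in> D" using a4 by simp
  show "\<rho> {} = 0" by (rule b)
  show "\<And>A B. A \<in> D \<Longrightarrow> B \<in> D \<Longrightarrow> A \<subseteq> B \<Longrightarrow> \<rho> A \<le> \<rho> B" using c by simp
  show "\<And>A B. A \<in> D \<Longrightarrow> B \<in> D \<Longrightarrow> \<rho> (A \<union> B) + \<rho> (A \<inter> B) \<le> \<rho> A + \<rho> B" using d by simp
  show "\<And>A a. A \<in> D \<Longrightarrow> insert a A \<in> D \<Longrightarrow> \<rho> (insert a A) \<le> \<rho> A + 1" using e by simp
qed

lemma chain_le:
  assumes U: "U_matroid D \<rho>" and A: "A \<in> D" and B: "B \<in> D"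
  shows "\<rho> (A \<union> B) \<le> \<rho> A + card (B - A)"
  using B
proof (induction "card B" arbitrary: B rule: less_induct)
  case less
  show ?case
  proof (cases "B = {}")
    case True thus ?thesis by simp
  next
    case False
    obtain b where b: "b \<in> B" "B - {b} \<in> D" using U_D_props(5)[OF U less.prems False] by blast
    have "card (B - {b}) < card B" using b(1) by (intro card_Diff1_less) auto
    then have IH: "\<rho> (A \<union> (B - {b})) \<le> \<rho> A + card (B - {b} - A)" using less b by blast
    show ?thesis
    proof (cases "b \<in> A")
      case True
      then have "A \<union> B = A \<union> (B - {b})" "B - {b} - A = B - A" using b by auto
      with IH show ?thesis by simp
    next
      case False
      have un: "A \<union> (B - {b}) \<in> D" using U_D_props(3)[OF U A b(2)] .
      have eq: "A \<union> B = insert b (A \<union> (B - {b}))" using b by auto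
      have "A \<union> B \<in> D" using U_D_props(3)[OF U A less.prems] .
      then have "\<rho> (A \<union> B) \<le> \<rho> (A \<union> (B - {b})) + 1"
        using U_D_props(9)[OF U un, of b] eq by simp
      moreover have "B - A = insert b (B - {b} - A)" using b False by auto
      then have "card (B - A) = card (B - {b} - A) + 1" by simp
      ultimately show ?thesis using IH by simp
    qed
  qed
qed

lemma rk_eq:
  assumes U: "U_matroid D \<rho>" and A: "A \<in> D"
  shows "rk D \<rho> A = \<rho> A"
proof (rule antisym)
  show "rk D \<rho> A \<le> \<rho> A" using rk_le[OF A, of \<rho> A] by simp
  obtain B where B: "B \<in> D" "rk D \<rho> A = \<rho> B + card (A - B)"
    using rk_attained[of D \<rho> A] A by blast
  have "\<rho> A \<le> \<rho> (B \<union> A)" using U_D_props(7)[OF U A U_D_props(3)[OF U B(1) A]] by auto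
  also have "\<dots> \<le> \<rho> B + card (A - B)" using chain_le[OF U B(1) A] .
  finally show "\<rho> A \<le> rk D \<rho> A" using B by simp
qed

lemma rk_mono:
  assumes "D \<noteq> {}" "X \<subseteq> Y"
  shows "rk D \<rho> X \<le> rk D \<rho> Y"
proof -
  obtain B where B: "B \<in> D" "rk D \<rho> Y = \<rho> B + card (Y - B)"
    using rk_attained[OF assms(1)] by blast
  have "card (X - B) \<le> card (Y - B)" using assms(2) by (intro card_mono) auto
  then show ?thesis using rk_le[OF B(1), of \<rho> X] B(2) by simp
qed

lemma card_diff_tri: "card (X - (B::'n::finite set)) \<le> card (A - B) + card (X - A)"
proof -
  have "card (X - B) \<le> card ((A - B) \<union> (X - A))" by (intro card_mono) auto
  also have "\<dots> \<le> card (A - B) + card (X - A)" by (rule card_Un_le)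
  finally show ?thesis .
qed

lemma rk_lip:
  assumes "D \<noteq> {}"
  shows "rk D \<rho> X \<le> rk D \<rho> A + card (X - A)"
proof -
  obtain B where B: "B \<in> D" "rk D \<rho> A = \<rho> B + card (A - B)"
    using rk_attained[OF assms(1)] by blast
  show ?thesis using rk_le[OF B(1), of \<rho> X] B(2) card_diff_tri[of X B A] by simp
qed

lemma card_submod_aux:
  fixes X Y B C :: "'n::finite set"
  shows "card ((X \<union> Y) - (B \<union> C)) + card ((X \<inter> Y) - (B \<inter> C)) \<le> card (X - B) + card (Y - C)"
proof -
  let ?P = "(X \<union> Y) - (B \<union> C)" and ?Q = "(X \<inter> Y) - (B \<inter> C)"
  have "card ?P + card ?Q = card (?P \<union> ?Q) + card (?P \<inter> ?Q)" by (rule card_Un_Int) auto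
  also have "\<dots> \<le> card ((X - B) \<union> (Y - C)) + card ((X - B) \<inter> (Y - C))"
    by (intro add_mono card_mono) auto
  also have "\<dots> = card (X - B) + card (Y - C)" by (rule card_Un_Int[symmetric]) auto
  finally show ?thesis .
qed

lemma rk_submod:
  assumes U: "U_matroid D \<rho>"
  shows "rk D \<rho> (X \<union> Y) + rk D \<rho> (X \<inter> Y) \<le> rk D \<rho> X + rk D \<rho> Y"
proof -
  have ne: "D \<noteq> {}" using U_D_props(1)[OF U] by blast
  obtain B where B: "B \<in> D" "rk D \<rho> X = \<rho> B + card (X - B)" using rk_attained[OF ne] by blast
  obtain C where C: "C \<in> D" "rk D \<rho> Y = \<rho> C + card (Y - C)" using rk_attained[OF ne] by blast
  have "rk D \<rho> (X \<union> Y) \<le> \<rho> (B \<union> C) + card ((X \<union> Y) - (B \<union> C))"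
    by (rule rk_le) (rule U_D_props(3)[OF U B(1) C(1)])
  moreover have "rk D \<rho> (X \<inter> Y) \<le> \<rho> (B \<inter> C) + card ((X \<inter> Y) - (B \<inter> C))"
    by (rule rk_le) (rule U_D_props(4)[OF U B(1) C(1)])
  moreover have "\<rho> (B \<union> C) + \<rho> (B \<inter> C) \<le> \<rho> B + \<rho> C" using U_D_props(8)[OF U B(1) C(1)] .
  ultimately show ?thesis using B C card_submod_aux[of X Y B C] by linarith
qed

lemma rk_empty: "U_matroid D \<rho> \<Longrightarrow> rk D \<rho> {} = 0"
  using rk_eq[of D \<rho> "{}"] U_D_props(1,6) by fastforce

lemma rk_card: "U_matroid D \<rho> \<Longrightarrow> rk D \<rho> X \<le> card X"
  using rk_le[of "{}" D \<rho> X] U_D_props(1,6) by fastforce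

lemma Inter_in:
  assumes "finite F" "F \<noteq> {}" "F \<subseteq> D" "\<forall>A\<in>D. \<forall>B\<in>D. A \<inter> B \<in> D"
  shows "\<Inter>F \<in> D"
  using assms by (induction F rule: finite_ne_induct) auto

lemma sup_in_props:
  fixes D :: "'n::finite set set"
  assumes "UNIV \<in> D" "\<forall>A\<in>D. \<forall>B\<in>D. A \<inter> B \<in> D"
  shows "sup_in D X \<in> D" "X \<subseteq> sup_in D X" "\<And>C. C \<in> D \<Longrightarrow> X \<subseteq> C \<Longrightarrow> sup_in D X \<subseteq> C"
  unfolding sup_in_def
  using Inter_in[of "{T \<in> D. X \<subseteq> T}" D] assms by auto

definition inv_ok :: "('n::finite set \<Rightarrow> nat) \<Rightarrow> 'n set set \<Rightarrow> ('n set \<Rightarrow> nat) \<Rightarrow> bool" where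
  "inv_ok r D \<rho> \<longleftrightarrow> UNIV \<in> D \<and> (\<forall>A\<in>D. \<forall>B\<in>D. A \<union> B \<in> D \<and> A \<inter> B \<in> D)
     \<and> (\<forall>X\<in>D. \<rho> X = r X) \<and> (\<forall>X. \<exists>B\<in>D. r X = r B + card (X - B))"

lemma lattice_ext_closed:
  assumes cl: "\<forall>A\<in>D. \<forall>B\<in>D. A \<union> B \<in> D \<and> A \<inter> B \<in> D"
    and A: "A \<in> lattice_ext D a" and B: "B \<in> lattice_ext D a"
  shows "A \<union> B \<in> lattice_ext D a \<and> A \<inter> B \<in> lattice_ext D a"
proof -
  have in1: "Z \<in> lattice_ext D a" if "Z \<in> D" for Z using that unfolding lattice_ext_def by blast
  have in2: "insert a Z \<in> lattice_ext D a" if "Z \<in> D" for Z using that unfolding lattice_ext_def by blast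
  obtain A0 where A0: "A0 \<in> D" "A = A0 \<or> A = insert a A0" using A unfolding lattice_ext_def by blast
  obtain B0 where B0: "B0 \<in> D" "B = B0 \<or> B = insert a B0" using B unfolding lattice_ext_def by blast
  have u: "A0 \<union> B0 \<in> D" and i: "A0 \<inter> B0 \<in> D" using cl A0(1) B0(1) by auto
  have i1: "insert a A0 \<inter> B0 \<in> lattice_ext D a"
  proof (cases "a \<in> B0")
    case True then have "insert a A0 \<inter> B0 = insert a (A0 \<inter> B0)" by auto
    then show ?thesis using in2[OF i] by simp
  next
    case False then have "insert a A0 \<inter> B0 = A0 \<inter> B0" by auto
    then show ?thesis using in1[OF i] by simp
  qed
  have i2: "A0 \<inter> insert a B0 \<in> lattice_ext D a"
  proof (cases "a \<in> A0")
    case True then have "A0 \<inter> insert a B0 = insert a (A0 \<inter> B0)" by auto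
    then show ?thesis using in2[OF i] by simp
  next
    case False then have "A0 \<inter> insert a B0 = A0 \<inter> B0" by auto
    then show ?thesis using in1[OF i] by simp
  qed
  have i3: "insert a A0 \<inter> insert a B0 = insert a (A0 \<inter> B0)" by auto
  have u1: "insert a A0 \<union> B0 = insert a (A0 \<union> B0)" by auto
  have u2: "A0 \<union> insert a B0 = insert a (A0 \<union> B0)" by auto
  have u3: "insert a A0 \<union> insert a B0 = insert a (A0 \<union> B0)" by auto
  from A0(2) B0(2) show ?thesis
  proof (elim disjE)
    assume "A = A0" "B = B0" then show ?thesis using in1[OF u] in1[OF i] by simp
  next
    assume "A = A0" "B = insert a B0" then show ?thesis using in2[OF u] i2 u2 by simp
  next
    assume "A = insert a A0" "B = B0" then show ?thesis using in2[OF u] i1 u1 by simp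
  next
    assume "A = insert a A0" "B = insert a B0" then show ?thesis using in2[OF u] in2[OF i] i3 u3 by simp
  qed
qed

lemma inv_step:
  assumes inv: "inv_ok r D \<rho>"
    and r_mono: "\<And>X Y. X \<subseteq> Y \<Longrightarrow> r X \<le> r Y"
    and r_lip: "\<And>X A. r X \<le> r A + card (X - A)"
  shows "inv_ok r (lattice_ext D a) (atom_ext D \<rho> a)"
proof -
  have U: "UNIV \<in> D" and cl: "\<forall>A\<in>D. \<forall>B\<in>D. A \<union> B \<in> D \<and> A \<inter> B \<in> D"
    and eq: "\<forall>X\<in>D. \<rho> X = r X" and att: "\<forall>X. \<exists>B\<in>D. r X = r B + card (X - B)"
    using inv unfolding inv_ok_def by blast+
  have clI: "\<forall>A\<in>D. \<forall>B\<in>D. A \<inter> B \<in> D" using cl by blast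
  have c1: "\<forall>A\<in>lattice_ext D a. \<forall>B\<in>lattice_ext D a. A \<union> B \<in> lattice_ext D a \<and> A \<inter> B \<in> lattice_ext D a"
    using lattice_ext_closed[OF cl] by blast
  have c2: "\<forall>X\<in>lattice_ext D a. atom_ext D \<rho> a X = r X"
  proof
    fix X assume X: "X \<in> lattice_ext D a"
    show "atom_ext D \<rho> a X = r X"
    proof (cases "X \<in> D")
      case True thus ?thesis using eq unfolding atom_ext_def by simp
    next
      case False
      obtain T where T: "T \<in> D" "X = insert a T" using X False unfolding lattice_ext_def by blast
      have aT: "a \<notin> T" using T False by (metis insert_absorb)
      have XT: "X - {a} = T" using T aT by auto
      define S where "S = sup_in D X"
      have S12: "S \<in> D" "X \<subseteq> S"
        using sup_in_props(1,2)[OF U clI, of X] unfolding S_def by auto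
      have S3: "\<And>C. C \<in> D \<Longrightarrow> X \<subseteq> C \<Longrightarrow> S \<subseteq> C"
        unfolding S_def by (rule sup_in_props(3)[OF U clI])
      note S = S12 S3
      have ae: "atom_ext D \<rho> a X = (if r T = r S then r T else r T + 1)"
        unfolding atom_ext_def using False XT eq T(1) S(1) S_def by simp
      have TX: "r T \<le> r X" unfolding T(2) by (rule r_mono) auto
      have XS: "r X \<le> r S" by (rule r_mono[OF S(2)])
      have "X - T = {a}" using T aT by auto
      then have XT1: "r X \<le> r T + 1" using r_lip[of X T] by simp
      show ?thesis
      proof (cases "r T = r S")
        case True thus ?thesis using ae TX XS by simp
      next
        case ne: False
        have "\<not> r X \<le> r T"
        proof
          assume le: "r X \<le> r T"
          obtain B where B: "B \<in> D" "r X = r B + card (X - B)" using att by blast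
          show False
          proof (cases "a \<in> B")
            case False
            have "X - B = insert a (T - B)" using T False by auto
            then have "card (X - B) = card (T - B) + 1" using aT by simp
            then show False using le B r_lip[of T B] by simp
          next
            case True
            have BT: "B \<union> T \<in> D" using cl B T by auto
            have "X \<subseteq> B \<union> T" using T True by auto
            then have "S \<subseteq> B \<union> T" using S(3) BT by blast
            then have "r S \<le> r (B \<union> T)" using r_mono by blast
            also have "\<dots> \<le> r B + card (B \<union> T - B)" by (rule r_lip)
            also have "B \<union> T - B = X - B" using T True by auto
            finally have "r S \<le> r X" using B by simp
            then show False using le ne r_mono[OF S(2)] r_mono[of T S] S(2) T by auto
          qed
        qed
        then show ?thesis using ae ne XT1 by simp
      qed
    qed
  qed
  have "UNIV \<in> lattice_ext D a" using U unfolding lattice_ext_def by blast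
  moreover have "\<forall>X. \<exists>B\<in>lattice_ext D a. r X = r B + card (X - B)"
    using att unfolding lattice_ext_def by blast
  ultimately show ?thesis using c1 c2 unfolding inv_ok_def by blast
qed

lemma inv_gen_ext:
  assumes "gen_ext D \<rho> D' \<rho>'" "inv_ok r D \<rho>"
    and r_mono: "\<And>X Y. X \<subseteq> Y \<Longrightarrow> r X \<le> r Y"
    and r_lip: "\<And>X A. r X \<le> r A + card (X - A)"
  shows "inv_ok r D' \<rho>'"
  using assms(1,2)
proof (induction rule: gen_ext.induct)
  case (gen_refl D \<rho>) thus ?case .
next
  case (gen_step a D \<rho> D' \<rho>')
  show ?case by (rule gen_step.IH) (rule inv_step[OF gen_step.prems r_mono r_lip])
qed

lemma rho_h_eq:
  assumes U: "U_matroid D \<rho>" and G: "generous_matroid_extension D \<rho> \<rho>h"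
  shows "\<rho>h X = rk D \<rho> X"
proof -
  have ne: "D \<noteq> {}" using U_D_props(1)[OF U] by blast
  have I0: "inv_ok (rk D \<rho>) D \<rho>"
    unfolding inv_ok_def
  proof (intro conjI)
    show "UNIV \<in> D" using U_D_props(2)[OF U] .
    show "\<forall>A\<in>D. \<forall>B\<in>D. A \<union> B \<in> D \<and> A \<inter> B \<in> D" using U_D_props(3,4)[OF U] by simp
    show "\<forall>X\<in>D. \<rho> X = rk D \<rho> X" using rk_eq[OF U] by simp
    show "\<forall>X. \<exists>B\<in>D. rk D \<rho> X = rk D \<rho> B + card (X - B)"
    proof
      fix X
      obtain B where B: "B \<in> D" "rk D \<rho> X = \<rho> B + card (X - B)" using rk_attained[OF ne] by blast
      have "rk D \<rho> X = rk D \<rho> B + card (X - B)" using B(2) rk_eq[OF U B(1)] by simp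
      then show "\<exists>B\<in>D. rk D \<rho> X = rk D \<rho> B + card (X - B)" by (rule bexI[OF _ B(1)])
    qed
  qed
  have G0: "gen_ext D \<rho> UNIV \<rho>h" using G unfolding generous_matroid_extension_def .
  have "inv_ok (rk D \<rho>) UNIV \<rho>h"
    by (rule inv_gen_ext[OF G0 I0 rk_mono[OF ne] rk_lip[OF ne]])
  then have "\<forall>X\<in>UNIV. \<rho>h X = rk D \<rho> X" unfolding inv_ok_def by (elim conjE)
  then show ?thesis by simp
qed


lemma sorted_enum:
  fixes f :: "'n::finite \<Rightarrow> real"
  shows "\<exists>e. bij_betw e {..<CARD('n)} (UNIV::'n set) \<and>
     (\<forall>i j. i \<le> j \<longrightarrow> j < CARD('n) \<longrightarrow> f (e j) \<le> f (e i))"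
proof -
  obtain xs where xs: "set xs = (UNIV::'n set)" "distinct xs"
    using finite_distinct_list[of "UNIV::'n set"] by auto
  define ys where "ys = sort_key (\<lambda>a. - f a) xs"
  have ys: "set ys = UNIV" "distinct ys" "length ys = CARD('n)"
    using xs distinct_card[OF xs(2)] unfolding ys_def by auto
  have so: "sorted (map (\<lambda>a. - f a) ys)" unfolding ys_def by simp
  have "bij_betw ((!) ys) {..<CARD('n)} UNIV" by (rule bij_betw_nth) (use ys in auto)
  moreover have "\<forall>i j. i \<le> j \<longrightarrow> j < CARD('n) \<longrightarrow> f (ys ! j) \<le> f (ys ! i)"
  proof (intro allI impI)
    fix i j :: nat assume "i \<le> j" "j < CARD('n)"
    then have "map (\<lambda>a. - f a) ys ! i \<le> map (\<lambda>a. - f a) ys ! j"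
      using sorted_nth_mono[OF so] ys(3) by simp
    then show "f (ys ! j) \<le> f (ys ! i)" using \<open>i \<le> j\<close> \<open>j < CARD('n)\<close> ys(3) by simp
  qed
  ultimately show ?thesis by blast
qed

lemma abel_ineq:
  fixes c y g :: "nat \<Rightarrow> real"
  assumes "\<forall>i<k. 0 \<le> c i" "\<forall>i j. i \<le> j \<longrightarrow> j < k \<longrightarrow> c j \<le> c i"
    "\<forall>j\<le>k. (\<Sum>i<j. y i) \<le> (\<Sum>i<j. g i)"
  shows "(\<Sum>i<k. c i * y i) \<le> (\<Sum>i<k. c i * g i)"
  using assms
proof (induction k arbitrary: c)
  case 0 thus ?case by simp
next
  case (Suc k)
  define d where "d i = c i - c k" for i
  have d1: "\<forall>i<k. 0 \<le> d i" using Suc.prems(2) unfolding d_def by auto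
  have d2: "\<forall>i j. i \<le> j \<longrightarrow> j < k \<longrightarrow> d j \<le> d i" using Suc.prems(2) unfolding d_def by auto
  have IH: "(\<Sum>i<k. d i * y i) \<le> (\<Sum>i<k. d i * g i)"
    using Suc.IH[OF d1 d2] Suc.prems(3) by auto
  have eq: "(\<Sum>i<Suc k. c i * z i) = (\<Sum>i<k. d i * z i) + c k * (\<Sum>i<Suc k. z i)" for z :: "nat \<Rightarrow> real"
  proof -
    have "(\<Sum>i<k. d i * z i) = (\<Sum>i<k. c i * z i) - c k * (\<Sum>i<k. z i)"
      unfolding d_def by (simp add: left_diff_distrib sum_subtractf sum_distrib_left)
    then show ?thesis by (simp add: algebra_simps)
  qed
  have "c k * (\<Sum>i<Suc k. y i) \<le> c k * (\<Sum>i<Suc k. g i)"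
    using Suc.prems(1,3) by (intro mult_left_mono) auto
  then show ?case unfolding eq[of y] eq[of g] using IH by linarith
qed

lemma vsum_char: "vsum_set (char_vec I) A = real (card (I \<inter> A))"
proof -
  have "vsum_set (char_vec I) A = (\<Sum>a\<in>A. if a \<in> I then 1 else 0)"
    unfolding vsum_set_def char_vec_def by simp
  also have "\<dots> = real (card (A \<inter> I))" by (simp add: sum.If_cases)
  finally show ?thesis by (simp add: Int_commute)
qed

locale greedy_setup =
  fixes r :: "'n::finite set \<Rightarrow> nat" and e :: "nat \<Rightarrow> 'n" and N :: nat
  assumes r0: "r {} = 0"
    and rm: "\<And>X Y. X \<subseteq> Y \<Longrightarrow> r X \<le> r Y"
    and ru: "\<And>x X. r (insert x X) \<le> r X + 1"
    and rs: "\<And>X Y. r (X \<union> Y) + r (X \<inter> Y) \<le> r X + r Y"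
    and bij: "bij_betw e {..<N} (UNIV::'n set)"
begin

definition E where "E i = e ` {..<i}"
definition J where "J i \<longleftrightarrow> r (E i) < r (E (Suc i))"
definition G where "G k = e ` {i. i < k \<and> J i}"

lemma inj: "inj_on e {..<N}" using bij by (simp add: bij_betw_def)

lemma e_eq: "i < N \<Longrightarrow> j < N \<Longrightarrow> e i = e j \<longleftrightarrow> i = j"
  using inj by (auto dest: inj_onD)

lemma E_Suc: "E (Suc k) = insert (e k) (E k)"
  unfolding E_def by (simp add: lessThan_Suc)

lemma E_N: "E N = UNIV" using bij unfolding E_def bij_betw_def by simp

lemma ek_notin_E: "k < N \<Longrightarrow> e k \<notin> E k"
  unfolding E_def using e_eq by auto

lemma ek_in_G: "j < N \<Longrightarrow> k \<le> N \<Longrightarrow> e j \<in> G k \<longleftrightarrow> j < k \<and> J j"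
  unfolding G_def using e_eq by auto

lemma G_Suc: "k < N \<Longrightarrow> G (Suc k) = (if J k then insert (e k) (G k) else G k)"
  unfolding G_def by (auto simp: less_Suc_eq)

lemma G1: "k \<le> N \<Longrightarrow> card (G k \<inter> X) \<le> r (X \<inter> E k)"
proof (induction k)
  case 0 thus ?case by (simp add: G_def)
next
  case (Suc k)
  then have kN: "k < N" by simp
  have IH: "card (G k \<inter> X) \<le> r (X \<inter> E k)" using Suc by simp
  have notin: "e k \<notin> G k" using ek_in_G[OF kN, of k] kN by simp
  show ?case
  proof (cases "J k \<and> e k \<in> X")
    case True
    have "G (Suc k) \<inter> X = insert (e k) (G k \<inter> X)" using G_Suc[OF kN] True by auto
    then have c: "card (G (Suc k) \<inter> X) = card (G k \<inter> X) + 1" using notin by simp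
    have "r (E k \<union> (X \<inter> E (Suc k))) + r (E k \<inter> (X \<inter> E (Suc k))) \<le> r (E k) + r (X \<inter> E (Suc k))"
      by (rule rs)
    moreover have "E k \<union> (X \<inter> E (Suc k)) = E (Suc k)" using True E_Suc by auto
    moreover have "E k \<inter> (X \<inter> E (Suc k)) = X \<inter> E k" using E_Suc by auto
    moreover have "r (E k) < r (E (Suc k))" using True J_def by simp
    ultimately show ?thesis using c IH by simp
  next
    case False
    then have "G (Suc k) \<inter> X = G k \<inter> X" using G_Suc[OF kN] by auto
    moreover have "r (X \<inter> E k) \<le> r (X \<inter> E (Suc k))" using E_Suc by (intro rm) auto
    ultimately show ?thesis using IH by simp
  qed
qed

lemma G2: "j \<le> k \<Longrightarrow> k \<le> N \<Longrightarrow> card (G k \<inter> E j) = r (E j)"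
proof (induction j)
  case 0 thus ?case by (simp add: E_def r0)
next
  case (Suc j)
  then have jN: "j < N" and jk: "j < k" by auto
  have IH: "card (G k \<inter> E j) = r (E j)" using Suc by simp
  have notin: "e j \<notin> E j" using ek_notin_E[OF jN] .
  show ?case
  proof (cases "J j")
    case True
    then have "e j \<in> G k" using ek_in_G[OF jN Suc.prems(2)] jk by simp
    then have "G k \<inter> E (Suc j) = insert (e j) (G k \<inter> E j)" using E_Suc by auto
    then have "card (G k \<inter> E (Suc j)) = card (G k \<inter> E j) + 1" using notin by simp
    moreover have "r (E (Suc j)) = r (E j) + 1"
      using True J_def ru[of "e j" "E j"] E_Suc by simp
    ultimately show ?thesis using IH by simp
  next
    case False
    then have "e j \<notin> G k" using ek_in_G[OF jN Suc.prems(2)] by simp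
    then have "G k \<inter> E (Suc j) = G k \<inter> E j" using E_Suc by auto
    moreover have "r (E j) \<le> r (E (Suc j))" unfolding E_Suc by (rule rm) auto
    then have "r (E (Suc j)) = r (E j)" using False unfolding J_def by linarith
    ultimately show ?thesis using IH by simp
  qed
qed

lemma sum_E: "j \<le> N \<Longrightarrow> (\<Sum>i<j. f (e i)) = sum f (E j)"
  unfolding E_def by (subst sum.reindex) (auto intro: inj_on_subset[OF inj])

lemma inner_eq: "inner w x = (\<Sum>i<N. w $ e i * x $ e i)"
proof -
  have "inner w x = (\<Sum>a\<in>UNIV. w $ a * x $ a)" by (simp add: inner_vec_def)
  also have "\<dots> = (\<Sum>i<N. w $ e i * x $ e i)" using sum_E[of N "\<lambda>a. w $ a * x $ a"] E_N by simp
  finally show ?thesis .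
qed

lemma prefix_y: "j \<le> N \<Longrightarrow> (\<Sum>i<j. x $ e i) = vsum_set x (E j)"
  using sum_E[of j "\<lambda>a. x $ a"] unfolding vsum_set_def by simp

lemma greedy_P:
  fixes w y :: "real^'n"
  assumes so: "\<forall>i j. i \<le> j \<longrightarrow> j < N \<longrightarrow> w $ e j \<le> w $ e i"
    and yr: "\<forall>X. vsum_set y X \<le> real (r X)" and y0: "\<forall>i. 0 \<le> y $ i"
  shows "\<exists>Gs. (\<forall>X. card (Gs \<inter> X) \<le> r X) \<and> inner w y \<le> inner w (char_vec Gs)"
proof -
  define k where "k = (LEAST i. i = N \<or> w $ e i \<le> 0)"
  have kN: "k \<le> N" unfolding k_def by (rule Least_le) simp
  have pos: "i < k \<Longrightarrow> 0 < w $ e i" for i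
    using not_less_Least[of i "\<lambda>i. i = N \<or> w $ e i \<le> 0"] kN unfolding k_def[symmetric] by auto
  have neg: "k \<le> i \<Longrightarrow> i < N \<Longrightarrow> w $ e i \<le> 0" for i
  proof -
    assume ki: "k \<le> i" "i < N"
    have "k = N \<or> w $ e k \<le> 0" unfolding k_def by (rule LeastI[of _ N]) simp
    then have "w $ e k \<le> 0" using ki by auto
    then show ?thesis using so ki by force
  qed
  define g where "g = char_vec (G k)"
  have g1: "\<forall>X. card (G k \<inter> X) \<le> r X"
  proof
    fix X
    have "card (G k \<inter> X) \<le> r (X \<inter> E k)" by (rule G1[OF kN])
    also have "r (X \<inter> E k) \<le> r X" by (rule rm) auto
    finally show "card (G k \<inter> X) \<le> r X" .
  qed
  have split: "(\<Sum>i<N. f i) = (\<Sum>i<k. f i) + (\<Sum>i\<in>{k..<N}. f i)" for f :: "nat \<Rightarrow> real"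
  proof -
    have "{..<N} = {..<k} \<union> {k..<N}" using kN by auto
    then have "(\<Sum>i<N. f i) = sum f ({..<k} \<union> {k..<N})" by simp
    also have "\<dots> = (\<Sum>i<k. f i) + (\<Sum>i\<in>{k..<N}. f i)" by (rule sum.union_disjoint) auto
    finally show ?thesis .
  qed
  have "inner w y = (\<Sum>i<k. w $ e i * y $ e i) + (\<Sum>i\<in>{k..<N}. w $ e i * y $ e i)"
    using inner_eq split by simp
  also have "(\<Sum>i\<in>{k..<N}. w $ e i * y $ e i) \<le> 0"
    by (intro sum_nonpos) (simp add: mult_nonpos_nonneg neg y0)
  also have "(\<Sum>i<k. w $ e i * y $ e i) \<le> (\<Sum>i<k. w $ e i * g $ e i)"
  proof (rule abel_ineq)
    show "\<forall>i<k. 0 \<le> w $ e i" using pos by (simp add: less_imp_le)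
    show "\<forall>i j. i \<le> j \<longrightarrow> j < k \<longrightarrow> w $ e j \<le> w $ e i" using so kN by auto
    show "\<forall>j\<le>k. (\<Sum>i<j. y $ e i) \<le> (\<Sum>i<j. g $ e i)"
    proof (intro allI impI)
      fix j assume jk: "j \<le> k"
      have "(\<Sum>i<j. y $ e i) = vsum_set y (E j)" using prefix_y jk kN by simp
      also have "\<dots> \<le> r (E j)" using yr by simp
      also have "r (E j) = card (G k \<inter> E j)" using G2[OF jk kN] by simp
      also have "\<dots> = vsum_set g (E j)" unfolding g_def vsum_char ..
      also have "\<dots> = (\<Sum>i<j. g $ e i)" using prefix_y jk kN by simp
      finally show "(\<Sum>i<j. y $ e i) \<le> (\<Sum>i<j. g $ e i)" .
    qed
  qed
  also have "(\<Sum>i<k. w $ e i * g $ e i) = inner w g"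
  proof -
    have "(\<Sum>i\<in>{k..<N}. w $ e i * g $ e i) = 0"
    proof (intro sum.neutral ballI)
      fix i assume "i \<in> {k..<N}"
      then have "e i \<notin> G k" using ek_in_G[of i k] kN by auto
      then show "w $ e i * g $ e i = 0" unfolding g_def char_vec_def by simp
    qed
    then show ?thesis using inner_eq split by simp
  qed
  finally show ?thesis using g1 unfolding g_def by auto
qed

lemma greedy_B:
  fixes w y :: "real^'n"
  assumes so: "\<forall>i j. i \<le> j \<longrightarrow> j < N \<longrightarrow> w $ e j \<le> w $ e i"
    and yr: "\<forall>X. vsum_set y X \<le> real (r X)" and yU: "vsum_set y UNIV = real (r UNIV)"
  shows "\<exists>Gs. (\<forall>X. card (Gs \<inter> X) \<le> r X) \<and> card Gs = r UNIV \<and> inner w y \<le> inner w (char_vec Gs)"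
proof -
  have N0: "0 < N"
  proof (rule ccontr)
    assume "\<not> 0 < N"
    then have "E N = {}" unfolding E_def by simp
    then show False using E_N by simp
  qed
  define m where "m = w $ e (N - 1)"
  define c where "c i = w $ e i - m" for i
  define g where "g = char_vec (G N)"
  have g1: "\<forall>X. card (G N \<inter> X) \<le> r X"
  proof
    fix X
    have "card (G N \<inter> X) \<le> r (X \<inter> E N)" by (rule G1[OF order_refl])
    also have "r (X \<inter> E N) \<le> r X" by (rule rm) auto
    finally show "card (G N \<inter> X) \<le> r X" .
  qed
  have g2: "card (G N) = r UNIV" using G2[of N N] E_N by simp
  have pre: "\<forall>j\<le>N. (\<Sum>i<j. y $ e i) \<le> (\<Sum>i<j. g $ e i)"
  proof (intro allI impI)
    fix j assume jk: "j \<le> N"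
    have "(\<Sum>i<j. y $ e i) = vsum_set y (E j)" using prefix_y jk by simp
    also have "\<dots> \<le> r (E j)" using yr by simp
    also have "r (E j) = card (G N \<inter> E j)" using G2[OF jk] by simp
    also have "\<dots> = vsum_set g (E j)" unfolding g_def vsum_char ..
    also have "\<dots> = (\<Sum>i<j. g $ e i)" using prefix_y jk by simp
    finally show "(\<Sum>i<j. y $ e i) \<le> (\<Sum>i<j. g $ e i)" .
  qed
  have ab: "(\<Sum>i<N. c i * y $ e i) \<le> (\<Sum>i<N. c i * g $ e i)"
  proof (rule abel_ineq[OF _ _ pre])
    show "\<forall>i<N. 0 \<le> c i" using so N0 unfolding c_def m_def by auto
    show "\<forall>i j. i \<le> j \<longrightarrow> j < N \<longrightarrow> c j \<le> c i" using so unfolding c_def by auto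
  qed
  have dec: "inner w x = (\<Sum>i<N. c i * x $ e i) + m * vsum_set x UNIV" for x :: "real^'n"
  proof -
    have "(\<Sum>i<N. c i * x $ e i) = (\<Sum>i<N. w $ e i * x $ e i) - m * (\<Sum>i<N. x $ e i)"
      unfolding c_def by (simp add: left_diff_distrib sum_subtractf sum_distrib_left)
    moreover have "(\<Sum>i<N. x $ e i) = vsum_set x UNIV" using prefix_y[of N x] E_N by simp
    ultimately show ?thesis using inner_eq by simp
  qed
  have "vsum_set g UNIV = real (r UNIV)" unfolding g_def vsum_char using g2 by simp
  then have "inner w y \<le> inner w g" using dec[of y] dec[of g] ab yU by simp
  then show ?thesis using g1 g2 unfolding g_def by blast
qed

end

lemma hull_eq_from_greedy:
  fixes P S :: "(real^'n::finite) set"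
  assumes "convex P" "S \<subseteq> P" "finite S" "\<And>w x. x \<in> P \<Longrightarrow> \<exists>g\<in>S. inner w x \<le> inner w g"
  shows "convex hull S = P"
proof
  show "convex hull S \<subseteq> P" using assms(2,1) by (rule hull_minimal)
  show "P \<subseteq> convex hull S"
  proof
    fix x assume x: "x \<in> P"
    show "x \<in> convex hull S"
    proof (rule ccontr)
      assume nx: "x \<notin> convex hull S"
      have "closed (convex hull S)"
        using assms(3) by (intro compact_imp_closed compact_convex_hull finite_imp_compact)
      then obtain a b where ab: "inner a x < b" "\<forall>z\<in>convex hull S. b < inner a z"
        using separating_hyperplane_closed_point[OF convex_convex_hull _ nx] by blast
      obtain g where g: "g \<in> S" "inner (-a) x \<le> inner (-a) g" using assms(4)[OF x] by blast
      have "b < inner a g" using ab(2) g(1) hull_inc[of g S] by blast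
      then show False using ab(1) g(2) by simp
    qed
  qed
qed

lemma zero_one_char: "zero_one_vecs = range char_vec"
proof
  show "zero_one_vecs \<subseteq> range char_vec"
  proof
    fix x :: "real^'n" assume "x \<in> zero_one_vecs"
    then have "x = char_vec {i. x $ i = 1}"
      unfolding zero_one_vecs_def char_vec_def by (auto simp: vec_eq_iff)
    then show "x \<in> range char_vec" by blast
  qed
  show "range char_vec \<subseteq> zero_one_vecs"
    unfolding zero_one_vecs_def char_vec_def by auto
qed

lemma finite_zero_one: "finite (zero_one_vecs :: (real^'n::finite) set)"
  unfolding zero_one_char by simp

lemma zero_one_cube: "zero_one_vecs \<subseteq> unit_cube"
proof
  fix x :: "real^'n" assume "x \<in> zero_one_vecs"
  then have "\<forall>i. x $ i = 0 \<or> x $ i = 1" unfolding zero_one_vecs_def by simp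
  then have "\<forall>i. 0 \<le> x $ i \<and> x $ i \<le> 1" by (metis order_refl zero_le_one)
  then show "x \<in> unit_cube" unfolding unit_cube_def by simp
qed

lemma vsum_lin: "vsum_set (a *\<^sub>R u + b *\<^sub>R v) A = a * vsum_set u A + b * vsum_set v A"
  unfolding vsum_set_def by (simp add: sum.distrib sum_distrib_left)

lemma convex_submod:
  fixes D :: "'n::finite set set" and \<rho> :: "'n set \<Rightarrow> nat"
  shows "convex (submod_polyhedron D \<rho>)"
  unfolding convex_def submod_polyhedron_def
proof (intro ballI allI impI, simp only: mem_Collect_eq, intro ballI)
  fix x y :: "real^'n" and u v :: real and A :: "'n set"
  assume x: "\<forall>A\<in>D. vsum_set x A \<le> real (\<rho> A)" and y: "\<forall>A\<in>D. vsum_set y A \<le> real (\<rho> A)"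
    and uv: "0 \<le> u" "0 \<le> v" "u + v = 1" and A: "A \<in> D"
  have "u * vsum_set x A + v * vsum_set y A \<le> u * real (\<rho> A) + v * real (\<rho> A)"
    using x y A uv by (intro add_mono mult_left_mono) auto
  also have "\<dots> = real (\<rho> A)" using uv by (simp add: algebra_simps flip: distrib_right)
  finally show "vsum_set (u *\<^sub>R x + v *\<^sub>R y) A \<le> real (\<rho> A)" by (simp add: vsum_lin)
qed

lemma convex_base:
  fixes D :: "'n::finite set set" and \<rho> :: "'n set \<Rightarrow> nat"
  shows "convex (base_polyhedron D \<rho>)"
proof -
  have "base_polyhedron D \<rho> = submod_polyhedron D \<rho> \<inter> {x. vsum_set x UNIV = real (\<rho> UNIV)}"
    unfolding base_polyhedron_def by auto
  moreover have "convex {x :: real^'n. vsum_set x UNIV = real (\<rho> UNIV)}"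
    unfolding convex_def by (auto simp: vsum_lin simp flip: distrib_right)
  ultimately show ?thesis using convex_submod convex_Int by metis
qed

lemma convex_cube: "convex unit_cube"
  unfolding convex_def unit_cube_def
proof (intro ballI allI impI, simp only: mem_Collect_eq, intro allI conjI)
  fix x y :: "real^'n" and u v :: real and i
  assume x: "\<forall>i. 0 \<le> x $ i \<and> x $ i \<le> 1" and y: "\<forall>i. 0 \<le> y $ i \<and> y $ i \<le> 1"
    and uv: "0 \<le> u" "0 \<le> v" "u + v = 1"
  show "0 \<le> (u *\<^sub>R x + v *\<^sub>R y) $ i" using x y uv by simp
  have "u * x $ i + v * y $ i \<le> u * 1 + v * 1" using x y uv by (intro add_mono mult_left_mono) auto
  then show "(u *\<^sub>R x + v *\<^sub>R y) $ i \<le> 1" using uv by simp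
qed


lemma rk_unit: "D \<noteq> {} \<Longrightarrow> rk D \<rho> (insert x X) \<le> rk D \<rho> X + 1"
proof -
  assume ne: "D \<noteq> {}"
  have "card (insert x X - X) \<le> card {x}" by (rule card_mono) auto
  then show ?thesis using rk_lip[OF ne, of \<rho> "insert x X" X] by simp
qed

lemma cube_le_rk:
  assumes U: "U_matroid D \<rho>" and y: "y \<in> submod_polyhedron D \<rho>" "y \<in> unit_cube"
  shows "vsum_set y X \<le> real (rk D \<rho> X)"
proof -
  have ne: "D \<noteq> {}" using U_D_props(1)[OF U] by blast
  obtain B where B: "B \<in> D" "rk D \<rho> X = \<rho> B + card (X - B)" using rk_attained[OF ne] by blast
  have y01: "\<forall>i. 0 \<le> y$i \<and> y$i \<le> 1" using y(2) unfolding unit_cube_def by simp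
  have 1: "vsum_set y X = vsum_set y (X \<inter> B) + vsum_set y (X - B)"
    unfolding vsum_set_def by (rule sum.Int_Diff) simp
  have 2: "vsum_set y (X \<inter> B) \<le> vsum_set y B"
    unfolding vsum_set_def by (rule sum_mono2) (use y01 in auto)
  have 3: "vsum_set y B \<le> real (\<rho> B)" using y(1) B(1) unfolding submod_polyhedron_def by simp
  have "vsum_set y (X - B) \<le> (\<Sum>i\<in>X - B. 1)" unfolding vsum_set_def
    by (rule sum_mono) (use y01 in auto)
  then have 4: "vsum_set y (X - B) \<le> real (card (X - B))" by simp
  show ?thesis using 1 2 3 4 B(2) by simp
qed

lemma rk_le_rho: "A \<in> D \<Longrightarrow> rk D \<rho> A \<le> \<rho> A"
  using rk_le[of A D \<rho> A] by simp

theorem theorem4p14: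
  fixes D :: "'n::finite set set" and \<rho> \<rho>h :: "'n set \<Rightarrow> nat"
  assumes "U_matroid D \<rho>"
    and "generous_matroid_extension D \<rho> \<rho>h"
  shows "base_polyhedron UNIV \<rho>h = convex hull (base_polyhedron D \<rho> \<inter> zero_one_vecs)
       \<and> convex hull (base_polyhedron D \<rho> \<inter> zero_one_vecs) = base_polyhedron D \<rho> \<inter> unit_cube
       \<and> indep_polytope \<rho>h = convex hull (submod_polyhedron D \<rho> \<inter> zero_one_vecs)
       \<and> convex hull (submod_polyhedron D \<rho> \<inter> zero_one_vecs) = submod_polyhedron D \<rho> \<inter> unit_cube"
proof -
  note U = assms(1)
  have ne: "D \<noteq> {}" using U_D_props(1)[OF U] by blast
  have UD: "UNIV \<in> D" using U_D_props(2)[OF U] .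
  have hr: "\<And>X. \<rho>h X = rk D \<rho> X" using rho_h_eq[OF assms] .
  have gs: "greedy_setup (rk D \<rho>) e CARD('n)" if "bij_betw e {..<CARD('n)} (UNIV::'n set)" for e
  proof (unfold_locales)
    show "rk D \<rho> {} = 0" by (rule rk_empty[OF U])
    show "\<And>X Y. X \<subseteq> Y \<Longrightarrow> rk D \<rho> X \<le> rk D \<rho> Y" by (rule rk_mono[OF ne])
    show "\<And>x X. rk D \<rho> (insert x X) \<le> rk D \<rho> X + 1" by (rule rk_unit[OF ne])
    show "\<And>X Y. rk D \<rho> (X \<union> Y) + rk D \<rho> (X \<inter> Y) \<le> rk D \<rho> X + rk D \<rho> Y" by (rule rk_submod[OF U])
    show "bij_betw e {..<CARD('n)} UNIV" by (rule that)
  qed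
  have gmem_sub: "char_vec Gs \<in> submod_polyhedron D \<rho> \<inter> zero_one_vecs"
    if "\<forall>X. card (Gs \<inter> X) \<le> rk D \<rho> X" for Gs
  proof -
    have "\<forall>A\<in>D. vsum_set (char_vec Gs) A \<le> real (\<rho> A)"
    proof
      fix A assume A: "A \<in> D"
      have "card (Gs \<inter> A) \<le> rk D \<rho> A" using that by simp
      also have "\<dots> \<le> \<rho> A" by (rule rk_le_rho[OF A])
      finally show "vsum_set (char_vec Gs) A \<le> real (\<rho> A)" by (simp add: vsum_char)
    qed
    then show ?thesis unfolding submod_polyhedron_def zero_one_char by blast
  qed
  have eqB: "convex hull (base_polyhedron D \<rho> \<inter> zero_one_vecs) = base_polyhedron D \<rho> \<inter> unit_cube"
  proof (rule hull_eq_from_greedy)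
    show "convex (base_polyhedron D \<rho> \<inter> unit_cube)" using convex_base convex_cube by (rule convex_Int)
    show "base_polyhedron D \<rho> \<inter> zero_one_vecs \<subseteq> base_polyhedron D \<rho> \<inter> unit_cube"
      using zero_one_cube by blast
    show "finite (base_polyhedron D \<rho> \<inter> zero_one_vecs)" by (rule finite_subset[OF _ finite_zero_one]) simp
    fix w x :: "real^'n" assume x: "x \<in> base_polyhedron D \<rho> \<inter> unit_cube"
    obtain e where e: "bij_betw e {..<CARD('n)} (UNIV::'n set)"
      "\<forall>i j. i \<le> j \<longrightarrow> j < CARD('n) \<longrightarrow> w $ e j \<le> w $ e i"
      using sorted_enum[of "\<lambda>a. w $ a"] by blast
    interpret greedy_setup "rk D \<rho>" e "CARD('n)" by (rule gs[OF e(1)])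
    have xs: "x \<in> submod_polyhedron D \<rho>" "x \<in> unit_cube" using x unfolding base_polyhedron_def by auto
    have xU: "vsum_set x UNIV = real (rk D \<rho> UNIV)"
      using x rk_eq[OF U UD] unfolding base_polyhedron_def by simp
    have yr: "\<forall>X. vsum_set x X \<le> real (rk D \<rho> X)" using cube_le_rk[OF U xs] by simp
    obtain Gs where Gs: "\<forall>X. card (Gs \<inter> X) \<le> rk D \<rho> X" "card Gs = rk D \<rho> UNIV"
        "inner w x \<le> inner w (char_vec Gs)"
      using greedy_B[OF e(2) yr xU] by blast
    have "char_vec Gs \<in> base_polyhedron D \<rho> \<inter> zero_one_vecs"
      using gmem_sub[OF Gs(1)] Gs(2) rk_eq[OF U UD] unfolding base_polyhedron_def
      by (simp add: vsum_char)
    then show "\<exists>g\<in>base_polyhedron D \<rho> \<inter> zero_one_vecs. inner w x \<le> inner w g" using Gs(3) by blast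
  qed
  have eqA: "convex hull (submod_polyhedron D \<rho> \<inter> zero_one_vecs) = submod_polyhedron D \<rho> \<inter> unit_cube"
  proof (rule hull_eq_from_greedy)
    show "convex (submod_polyhedron D \<rho> \<inter> unit_cube)" using convex_submod convex_cube by (rule convex_Int)
    show "submod_polyhedron D \<rho> \<inter> zero_one_vecs \<subseteq> submod_polyhedron D \<rho> \<inter> unit_cube"
      using zero_one_cube by blast
    show "finite (submod_polyhedron D \<rho> \<inter> zero_one_vecs)" by (rule finite_subset[OF _ finite_zero_one]) simp
    fix w x :: "real^'n" assume x: "x \<in> submod_polyhedron D \<rho> \<inter> unit_cube"
    obtain e where e: "bij_betw e {..<CARD('n)} (UNIV::'n set)"
      "\<forall>i j. i \<le> j \<longrightarrow> j < CARD('n) \<longrightarrow> w $ e j \<le> w $ e i"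
      using sorted_enum[of "\<lambda>a. w $ a"] by blast
    interpret greedy_setup "rk D \<rho>" e "CARD('n)" by (rule gs[OF e(1)])
    have xs: "x \<in> submod_polyhedron D \<rho>" "x \<in> unit_cube" using x by auto
    have x0: "\<forall>i. 0 \<le> x $ i" using xs(2) unfolding unit_cube_def by simp
    have yr: "\<forall>X. vsum_set x X \<le> real (rk D \<rho> X)" using cube_le_rk[OF U xs] by simp
    obtain Gs where Gs: "\<forall>X. card (Gs \<inter> X) \<le> rk D \<rho> X" "inner w x \<le> inner w (char_vec Gs)"
      using greedy_P[OF e(2) yr x0] by blast
    then show "\<exists>g\<in>submod_polyhedron D \<rho> \<inter> zero_one_vecs. inner w x \<le> inner w g"
      using gmem_sub[OF Gs(1)] by blast
  qed
  have eq1: "base_polyhedron UNIV \<rho>h = base_polyhedron D \<rho> \<inter> unit_cube"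
  proof
    show "base_polyhedron UNIV \<rho>h \<subseteq> base_polyhedron D \<rho> \<inter> unit_cube"
    proof
      fix x assume x: "x \<in> base_polyhedron UNIV \<rho>h"
      have xr: "\<And>X. vsum_set x X \<le> real (rk D \<rho> X)" and xU: "vsum_set x UNIV = real (rk D \<rho> UNIV)"
        using x hr unfolding base_polyhedron_def submod_polyhedron_def by auto
      have "\<forall>A\<in>D. vsum_set x A \<le> real (\<rho> A)"
      proof
        fix A assume A: "A \<in> D"
        have "vsum_set x A \<le> real (rk D \<rho> A)" by (rule xr)
        also have "\<dots> \<le> real (\<rho> A)" using rk_le_rho[OF A] by simp
        finally show "vsum_set x A \<le> real (\<rho> A)" .
      qed
      moreover have "vsum_set x UNIV = real (\<rho> UNIV)" using xU rk_eq[OF U UD] by simp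
      moreover have "\<forall>i. 0 \<le> x $ i \<and> x $ i \<le> 1"
      proof
        fix i
        have "x $ i = vsum_set x {i}" unfolding vsum_set_def by simp
        also have "\<dots> \<le> real (rk D \<rho> {i})" by (rule xr)
        also have "\<dots> \<le> 1" using rk_card[OF U, of "{i}"] by simp
        finally have le1: "x $ i \<le> 1" .
        have "vsum_set x UNIV = vsum_set x (UNIV - {i}) + x $ i"
          unfolding vsum_set_def by (simp add: sum.remove[of UNIV i] add.commute)
        moreover have "vsum_set x (UNIV - {i}) \<le> real (rk D \<rho> (UNIV - {i}))" by (rule xr)
        moreover have "rk D \<rho> (UNIV - {i}) \<le> rk D \<rho> UNIV" by (rule rk_mono[OF ne]) auto
        ultimately have "0 \<le> x $ i" using xU by linarith
        then show "0 \<le> x $ i \<and> x $ i \<le> 1" using le1 by simp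
      qed
      ultimately show "x \<in> base_polyhedron D \<rho> \<inter> unit_cube"
        unfolding base_polyhedron_def submod_polyhedron_def unit_cube_def by simp
    qed
    show "base_polyhedron D \<rho> \<inter> unit_cube \<subseteq> base_polyhedron UNIV \<rho>h"
    proof
      fix x assume x: "x \<in> base_polyhedron D \<rho> \<inter> unit_cube"
      have xs: "x \<in> submod_polyhedron D \<rho>" "x \<in> unit_cube" using x unfolding base_polyhedron_def by auto
      have "vsum_set x UNIV = real (\<rho>h UNIV)"
        using x rk_eq[OF U UD] hr unfolding base_polyhedron_def by simp
      then show "x \<in> base_polyhedron UNIV \<rho>h"
        using cube_le_rk[OF U xs] hr unfolding base_polyhedron_def submod_polyhedron_def by simp
    qed
  qed
  have eq3: "char_vec ` {I. \<rho>h I = card I} = submod_polyhedron D \<rho> \<inter> zero_one_vecs"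
  proof
    show "char_vec ` {I. \<rho>h I = card I} \<subseteq> submod_polyhedron D \<rho> \<inter> zero_one_vecs"
    proof
      fix x assume "x \<in> char_vec ` {I. \<rho>h I = card I}"
      then obtain I where I: "x = char_vec I" "rk D \<rho> I = card I" using hr by auto
      have "\<forall>A\<in>D. card (I \<inter> A) \<le> \<rho> A"
      proof
        fix A assume A: "A \<in> D"
        have "card I = card (I \<inter> A) + card (I - A)" by (rule card_Int_Diff) simp
        then show "card (I \<inter> A) \<le> \<rho> A" using rk_le[OF A, of \<rho> I] I(2) by simp
      qed
      then show "x \<in> submod_polyhedron D \<rho> \<inter> zero_one_vecs"
        unfolding I(1) submod_polyhedron_def zero_one_char by (simp add: vsum_char)
    qed
    show "submod_polyhedron D \<rho> \<inter> zero_one_vecs \<subseteq> char_vec ` {I. \<rho>h I = card I}"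
    proof
      fix x assume x: "x \<in> submod_polyhedron D \<rho> \<inter> zero_one_vecs"
      then obtain I where I: "x = char_vec I" unfolding zero_one_char by auto
      obtain B where B: "B \<in> D" "rk D \<rho> I = \<rho> B + card (I - B)" using rk_attained[OF ne] by blast
      have "card (I \<inter> B) \<le> \<rho> B" using x B(1) unfolding I submod_polyhedron_def by (simp add: vsum_char)
      moreover have "card I = card (I \<inter> B) + card (I - B)" by (rule card_Int_Diff) simp
      ultimately have "card I \<le> rk D \<rho> I" using B(2) by simp
      then have "rk D \<rho> I = card I" using rk_card[OF U, of I] by simp
      then show "x \<in> char_vec ` {I. \<rho>h I = card I}" using I hr by auto
    qed
  qed
  show ?thesis using eq1 eqB eqA eq3 unfolding indep_polytope_def by simp
qed

end
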